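(* Let $L,d\in \mathbb{N}$, $q\in [1,\infty]$, $c\in (0,\infty)$, and $N_1,\dots , N_{L-1}\in \mathbb{N}$. Then for every $m\in\mathbb{N}$, \[ \mathrm{err}_m^{MC}\left(\mathcal{H}_{(d,N_1,\dots , N_{L-1},1),c}^q,L^\infty([0,1]^d)\right) \le \begin{cases} 2\sqrt{d}\cdot c^L\cdot m^{-\frac1d} & \text{if } q\le 2, \\ 2\sqrt{d}\cdot c^L\cdot (\sqrt{d}\cdot N_1 \cdots N_{L-1})^{1-\frac{2}{q}}\cdot m^{-\frac1d} & \text{if } q\geq 2 .\end{cases} \]
   Context: ReLU: $\varrho(x)=\max\{0,x\}$, applied componentwise. For an architecture $(N_0,\dots,N_L)$ and coefficients $\Phi=((W^i,b^i))_{i=1}^L$ with $W^i\in\mathbb{R}^{N_i\times N_{i-1}}$, $b^i\in\mathbb{R}^{N_i}$, the realization is $R(\Phi)(x)=x^L$ with $x^0=x$, $x^i=\varrho(W^ix^{i-1}+b^i)$ for $1\le i\le L-1$, $x^L=W^Lx^{L-1}+b^L$. $\|\cdot\|_{\ell^q}$ of a matrix/vector is the entrywise $\ell^q$ norm, $\|\Phi\|_{\ell^q}=\max_i\max\{\|W^i\|_{\ell^q},\|b^i\|_{\ell^q}\}$, and $\mathcal{H}^q_{(N_0,\dots,N_L),c}=\{R(\Phi):\|\Phi\|_{\ell^q}\le c\}$, viewed as functions on $[0,1]^{N_0}$. Here $N_0=d$, $N_L=1$; $2/q=0$ for $q=\infty$. Algorithms: for a Banach space $Y$ and $U\subset C([0,1]^d)\cap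 Y$, $A:U\to Y$ is an adaptive deterministic method using $m$ point samples if there are $f_1\in[0,1]^d$, maps $f_i:([0,1]^d)^{i-1}\times\mathbb{R}^{i-1}\to[0,1]^d$ and $Q:([0,1]^d)^m\times\mathbb{R}^m\to Y$ such that, with $x_1=f_1$, $x_i=f_i(x_1,\dots,x_{i-1},u(x_1),\dots,u(x_{i-1}))$, $A(u)=Q(x_1,\dots,x_m,u(x_1),\dots,u(x_m))$ for all $u\in U$; these form $\mathrm{Alg}_m(U,Y)$. An adaptive random method using $m$ samples on average is $(\mathbf{A},\mathbf{m})$, $\mathbf{A}=(A_\omega)_{\omega\in\Omega}$ on a probability space, $\mathbf{m}:\Omega\to\mathbb{N}$ measurable with $\mathbb{E}[\mathbf{m}]\le m$, $\omega\mapsto A_\omega(u)$ Borel measurable for each $u$, and $A_\omega\in\mathrm{Alg}_{\mathbf{m}(\omega)}(U,Y)$; these form $\mathrm{Alg}^{MC}_m(U,Y)$. Then $\mathrm{err}^{MC}_m(U,Y)=\inf_{(\mathbf{A},\mathbf{m})\in\mathrm{Alg}^{MC}_m(U,Y)}\sup_{u\in U}\mathbb{E}[\|u-A_\omega(u)\|_Y]$. *)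

theory Defs
  imports "HOL-Probability.Probability"
begin

type_synonym point = "nat \<Rightarrow> real"
type_synonym layer = "(nat \<Rightarrow> nat \<Rightarrow> real) \<times> (nat \<Rightarrow> real)"

definition relu :: "real \<Rightarrow> real" where
  "relu x = max 0 x"

definition affine :: "nat \<Rightarrow> (nat \<Rightarrow> nat \<Rightarrow> real) \<Rightarrow> (nat \<Rightarrow> real) \<Rightarrow> point \<Rightarrow> point" where
  "affine n W b x = (\<lambda>i. (\<Sum>j<n. W i j * x j) + b i)"

text \<open>Architecture arch = [N_0,...,N_L]; coefficients Phi = [(W^1,b^1),...,(W^L,b^L)]
  (list index i holds layer i+1, with input dimension arch!i).
  hidden_state arch Phi i x = x^i for i <= L-1.\<close>
fun hidden_state :: "nat list \<Rightarrow> layer list \<Rightarrow> nat \<Rightarrow> point \<Rightarrow> point" where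
  "hidden_state arch Phi 0 x = x"
| "hidden_state arch Phi (Suc i) x =
     (\<lambda>k. relu (affine (arch ! i) (fst (Phi ! i)) (snd (Phi ! i)) (hidden_state arch Phi i x) k))"

text \<open>Realization R(Phi)(x) = x^L (output dimension N_L = 1, so the single component 0).\<close>
definition realization :: "nat list \<Rightarrow> layer list \<Rightarrow> point \<Rightarrow> real" where
  "realization arch Phi x =
     (let L = length Phi in
      affine (arch ! (L - 1)) (fst (Phi ! (L - 1))) (snd (Phi ! (L - 1)))
             (hidden_state arch Phi (L - 1) x) 0)"

definition lq_norm :: "ereal \<Rightarrow> 'i set \<Rightarrow> ('i \<Rightarrow> real) \<Rightarrow> real" where
  "lq_norm q A f =
     (if q = \<infinity> then Max (insert 0 ((\<lambda>a. \<bar>f a\<bar>) ` A))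
      else (\<Sum>a\<in>A. \<bar>f a\<bar> powr real_of_ereal q) powr (1 / real_of_ereal q))"

definition net_norm :: "ereal \<Rightarrow> nat list \<Rightarrow> layer list \<Rightarrow> real" where
  "net_norm q arch Phi =
     Max ((\<lambda>i. max (lq_norm q ({..<arch ! Suc i} \<times> {..<arch ! i}) (\<lambda>(r, s). fst (Phi ! i) r s))
                    (lq_norm q {..<arch ! Suc i} (snd (Phi ! i))))
          ` {..<length Phi})"

definition hyp_class :: "ereal \<Rightarrow> nat list \<Rightarrow> real \<Rightarrow> (point \<Rightarrow> real) set" where
  "hyp_class q arch c =
     {realization arch Phi | Phi. length Phi = length arch - 1 \<and> net_norm q arch Phi \<le> c}"

text \<open>[0,1]^d with Lebesgue measure; points are extensional functions on {..<d}.\<close>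
definition cube_measure :: "nat \<Rightarrow> point measure" where
  "cube_measure d = Pi\<^sub>M {..<d} (\<lambda>_. restrict_space lborel {0..1})"

definition cube :: "nat \<Rightarrow> point set" where
  "cube d = PiE {..<d} (\<lambda>_. {0..1})"

text \<open>L^infinity (semi)norm, with values in [0,infinity] (infinite / top if not measurable).\<close>
definition linf_enorm :: "nat \<Rightarrow> (point \<Rightarrow> real) \<Rightarrow> ennreal" where
  "linf_enorm d g = e2ennreal (esssup (cube_measure d) (\<lambda>x. ereal \<bar>g x\<bar>))"

text \<open>Elements of Y = L^infinity([0,1]^d) (representatives).\<close>
definition Linf :: "nat \<Rightarrow> (point \<Rightarrow> real) set" where
  "Linf d = {g. g \<in> borel_measurable (cube_measure d) \<and> linf_enorm d g < \<infinity>}"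

definition Linf_borel :: "nat \<Rightarrow> (point \<Rightarrow> real) measure" where
  "Linf_borel d = sigma (Linf d)
     {U. U \<subseteq> Linf d \<and> (\<forall>f\<in>U. \<exists>e>0. \<forall>g\<in>Linf d.
            linf_enorm d (\<lambda>x. f x - g x) < ennreal e \<longrightarrow> g \<in> U)}"

fun samples :: "(nat \<Rightarrow> point list \<Rightarrow> real list \<Rightarrow> point) \<Rightarrow> (point \<Rightarrow> real) \<Rightarrow> nat \<Rightarrow> point list" where
  "samples f u 0 = []"
| "samples f u (Suc k) = (let xs = samples f u k in xs @ [f k xs (map u xs)])"

definition Alg :: "nat \<Rightarrow> (point \<Rightarrow> real) set \<Rightarrow> nat \<Rightarrow> ((point \<Rightarrow> real) \<Rightarrow> (point \<Rightarrow> real)) set" where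
  "Alg m U d = {A. \<exists>f Q.
      (\<forall>k xs ys. f k xs ys \<in> cube d) \<and>
      (\<forall>xs ys. Q xs ys \<in> Linf d) \<and>
      (\<forall>u\<in>U. A u = Q (samples f u m) (map u (samples f u m)))}"

definition AlgMC :: "'w itself \<Rightarrow> nat \<Rightarrow> (point \<Rightarrow> real) set \<Rightarrow> nat \<Rightarrow>
    ('w measure \<times> ('w \<Rightarrow> (point \<Rightarrow> real) \<Rightarrow> (point \<Rightarrow> real)) \<times> ('w \<Rightarrow> nat)) set" where
  "AlgMC _ m U d = {(P, A, mm).
      prob_space P \<and>
      mm \<in> measurable P (count_space UNIV) \<and>
      (\<integral>\<^sup>+ \<omega>. of_nat (mm \<omega>) \<partial>P) \<le> of_nat m \<and>
      (\<forall>u\<in>U. (\<lambda>\<omega>. A \<omega> u) \<in> measurable P (Linf_borel d)) \<and>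
      (\<forall>\<omega>\<in>space P. A \<omega> \<in> Alg (mm \<omega>) U d)}"

definition errMC :: "'w itself \<Rightarrow> nat \<Rightarrow> (point \<Rightarrow> real) set \<Rightarrow> nat \<Rightarrow> ennreal" where
  "errMC w m U d = (INF (P, A, mm) \<in> AlgMC w m U d.
      SUP u\<in>U. \<integral>\<^sup>+ \<omega>. linf_enorm d (\<lambda>x. u x - A \<omega> u x) \<partial>P)"

end

theory Submission imports Defs begin

lemma bern_powr:
  fixes t r :: real assumes "t \<ge> 0" "r \<ge> 1"
  shows "1 + r * (t - 1) \<le> t powr r"
proof (cases "t = 0")
  case True then show ?thesis using assms by simp
next
  case False
  then have tp: "t > 0" using assms by simp
  have "r * (t - 1) \<le> t powr r - 1 powr r"
  proof (rule convex_on_imp_above_tangent[where A="{0<..}"])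
    show "convex_on {0<..} (\<lambda>x. x powr r)" using powr_convex assms by simp
    show "((\<lambda>x. x powr r) has_field_derivative r) (at 1 within {0<..})"
      by (rule derivative_eq_intros | simp)+
  qed (use tp in \<open>auto simp: interior_open\<close>)
  then show ?thesis by simp
qed

lemma power_mean_sum:
  fixes b :: "'a \<Rightarrow> real" assumes fin: "finite A" and ne: "A \<noteq> {}"
    and nn: "\<And>i. i \<in> A \<Longrightarrow> b i \<ge> 0" and r: "r \<ge> 1"
  shows "(\<Sum>i\<in>A. b i) \<le> real (card A) powr (1 - 1/r) * (\<Sum>i\<in>A. b i powr r) powr (1/r)"
proof -
  define n where "n = real (card A)"
  have n: "n > 0" using fin ne by (simp add: n_def card_gt_0_iff)
  define S where "S = (\<Sum>i\<in>A. b i powr r)"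
  have S0: "S \<ge> 0" unfolding S_def by (simp add: sum_nonneg)
  show ?thesis
  proof (cases "S = 0")
    case True
    then have "\<forall>i\<in>A. b i powr r = 0" unfolding S_def using fin
      by (subst (asm) sum_nonneg_eq_0_iff) auto
    then have "\<forall>i\<in>A. b i = 0" using r by auto
    then show ?thesis by simp
  next
    case False
    then have Sp: "S > 0" using S0 by simp
    define T where "T = (S / n) powr (1/r)"
    have Tp: "T > 0" using Sp n by (simp add: T_def)
    have Tr: "T powr r = S / n" using Sp n r by (simp add: T_def powr_powr)
    have each: "b i / T \<le> 1 + ((b i / T) powr r - 1) / r" if "i \<in> A" for i
    proof -
      have "1 + r * (b i / T - 1) \<le> (b i / T) powr r"
        by (rule bern_powr) (use nn[OF that] Tp r in auto)
      then show ?thesis using r by (simp add: field_simps)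
    qed
    have "(\<Sum>i\<in>A. b i / T) \<le> (\<Sum>i\<in>A. 1 + ((b i / T) powr r - 1) / r)"
      by (rule sum_mono) (rule each)
    also have "\<dots> = n + ((\<Sum>i\<in>A. (b i / T) powr r) - n) / r"
      by (simp add: sum.distrib sum_divide_distrib[symmetric] sum_subtractf n_def)
    also have "(\<Sum>i\<in>A. (b i / T) powr r) = (\<Sum>i\<in>A. b i powr r) / T powr r"
      using nn Tp by (simp add: powr_divide sum_divide_distrib)
    also have "\<dots> = n" using Tr Sp n by (simp add: S_def[symmetric])
    finally have "(\<Sum>i\<in>A. b i) / T \<le> n" by (simp add: sum_divide_distrib)
    then have "(\<Sum>i\<in>A. b i) \<le> n * T" using Tp by (simp add: field_simps)
    also have "n * T = n powr (1 - 1/r) * S powr (1/r)"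
    proof -
      have "n powr (1/r) * n powr ((r - 1) / r) = n powr (1/r + (r-1)/r)" by (simp add: powr_add)
      also have "1/r + (r-1)/r = 1" using r by (simp add: field_simps)
      finally have e: "n powr (1/r) * n powr ((r - 1) / r) = n" using n by simp
      show ?thesis
        using n Sp r e by (simp add: T_def powr_divide powr_diff field_simps)
    qed
    finally show ?thesis by (simp add: n_def S_def)
  qed
qed

definition ex_q :: "ereal \<Rightarrow> real" where
  "ex_q q = (if q \<le> 2 then 0 else if q = \<infinity> then 1 else 1 - 2 / real_of_ereal q)"

lemma small_p:
  fixes f :: "'a \<Rightarrow> real" assumes fin: "finite A" and p: "1 \<le> p"
  shows "(\<Sum>a\<in>A. (f a)\<^sup>2) \<le> ((\<Sum>a\<in>A. \<bar>f a\<bar> powr p) powr (1/p))\<^sup>2 \<or> p > 2"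
proof (cases "p \<le> 2")
  case p2: True
  define S where "S = (\<Sum>a\<in>A. \<bar>f a\<bar> powr p)"
  define M where "M = S powr (1/p)"
  have S0: "S \<ge> 0" unfolding S_def by (simp add: sum_nonneg)
  have "(\<Sum>a\<in>A. (f a)\<^sup>2) \<le> M\<^sup>2"
  proof (cases "S = 0")
    case True
    then have "\<forall>i\<in>A. \<bar>f i\<bar> powr p = 0" unfolding S_def using fin
      by (subst (asm) sum_nonneg_eq_0_iff) auto
    then have "\<forall>i\<in>A. f i = 0" using p by auto
    then show ?thesis by simp
  next
    case False
    then have Sp: "S > 0" using S0 by simp
    then have Mp: "M > 0" by (simp add: M_def)
    have MP: "M powr p = S" using Sp p by (simp add: M_def powr_powr)
    have le1: "\<bar>f a\<bar> / M \<le> 1" if "a \<in> A" for a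
    proof -
      have "\<bar>f a\<bar> powr p \<le> S" unfolding S_def
        by (rule member_le_sum) (use that fin in auto)
      then have "(\<bar>f a\<bar> powr p) powr (1/p) \<le> S powr (1/p)"
        using powr_mono2[of "1/p" "\<bar>f a\<bar> powr p" S] p by auto
      then have "\<bar>f a\<bar> \<le> M" using p by (simp add: powr_powr M_def)
      then show ?thesis using Mp by simp
    qed
    have "(\<Sum>a\<in>A. (\<bar>f a\<bar> / M) powr 2) \<le> (\<Sum>a\<in>A. (\<bar>f a\<bar> / M) powr p)"
      by (rule sum_mono, rule powr_mono') (use le1 p2 Mp in auto)
    also have "\<dots> = S / M powr p"
      by (simp add: S_def powr_divide sum_divide_distrib)
    also have "\<dots> = 1" using MP Sp by simp
    finally have "(\<Sum>a\<in>A. (\<bar>f a\<bar> / M) powr 2) \<le> 1" .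
    moreover have "(\<Sum>a\<in>A. (\<bar>f a\<bar> / M) powr 2) = (\<Sum>a\<in>A. (f a)\<^sup>2) / M\<^sup>2"
    proof -
      have "(\<bar>f a\<bar> / M) powr 2 = (f a)\<^sup>2 / M\<^sup>2" for a
      proof (cases "f a = 0")
        case True then show ?thesis by simp
      next
        case False
        then have "\<bar>f a\<bar> / M > 0" using Mp by simp
        then have "(\<bar>f a\<bar> / M) powr 2 = (\<bar>f a\<bar> / M)\<^sup>2" by (simp add: powr_realpow)
        then show ?thesis by (simp add: power_divide)
      qed
      then show ?thesis by (simp add: sum_divide_distrib)
    qed
    ultimately have "(\<Sum>a\<in>A. (f a)\<^sup>2) / M\<^sup>2 \<le> 1" by metis
    then show ?thesis using Mp by (simp add: divide_le_eq)
  qed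
  then show ?thesis by (simp add: M_def S_def)
qed simp

lemma frob:
  fixes f :: "'a \<Rightarrow> real"
  assumes fin: "finite A" and ne: "A \<noteq> {}" and q: "1 \<le> q" and c: "lq_norm q A f \<le> c"
  shows "L2_set f A \<le> c * real (card A) powr (ex_q q / 2)"
proof -
  have n: "real (card A) > 0" using fin ne by (simp add: card_gt_0_iff)
  show ?thesis
  proof (cases "q = \<infinity>")
    case True
    have "\<bar>f a\<bar> \<le> c" if "a \<in> A" for a
    proof -
      have "\<bar>f a\<bar> \<le> Max (insert 0 ((\<lambda>a. \<bar>f a\<bar>) ` A))"
        by (rule Max_ge) (use fin that in auto)
      then show ?thesis using c True by (simp add: lq_norm_def)
    qed
    then have "L2_set (\<lambda>a. \<bar>f a\<bar>) A \<le> L2_set (\<lambda>_. c) A"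
      by (intro L2_set_mono) auto
    moreover have "L2_set (\<lambda>a. \<bar>f a\<bar>) A = L2_set f A" by (simp add: L2_set_def)
    moreover have "c \<ge> 0" using \<open>\<And>a. a \<in> A \<Longrightarrow> \<bar>f a\<bar> \<le> c\<close> ne by force
    ultimately show ?thesis using True n
      by (simp add: L2_set_constant ex_q_def powr_half_sqrt mult.commute)
  next
    case False
    then obtain p where qp: "q = ereal p" using q by (cases q) auto
    then have p: "p \<ge> 1" using q by simp
    define S where "S = (\<Sum>a\<in>A. \<bar>f a\<bar> powr p)"
    define M where "M = S powr (1/p)"
    have Mc: "M \<le> c" using c qp by (simp add: lq_norm_def M_def S_def)
    have M0: "M \<ge> 0" by (simp add: M_def)
    show ?thesis
    proof (cases "p \<le> 2")
      case True
      then have "(\<Sum>a\<in>A. (f a)\<^sup>2) \<le> M\<^sup>2" using small_p[OF fin p, of f] by (simp add: M_def S_def)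
      then have "L2_set f A \<le> M" unfolding L2_set_def by (rule real_le_lsqrt[OF M0])
      then show ?thesis using Mc True qp n by (simp add: ex_q_def)
    next
      case False
      have pm: "(\<Sum>a\<in>A. \<bar>f a\<bar> powr 2) \<le> real (card A) powr (1 - 1/(p/2)) * (\<Sum>a\<in>A. (\<bar>f a\<bar> powr 2) powr (p/2)) powr (1/(p/2))"
        by (rule power_mean_sum) (use fin ne False in auto)
      have e1: "(\<Sum>a\<in>A. \<bar>f a\<bar> powr 2) = (\<Sum>a\<in>A. (f a)\<^sup>2)"
        by (rule sum.cong) (auto simp: powr_realpow')
      have e2: "(\<Sum>a\<in>A. (\<bar>f a\<bar> powr 2) powr (p/2)) = S"
        unfolding S_def by (rule sum.cong) (simp_all only: powr_powr, simp)
      have e3: "S powr (1/(p/2)) = M\<^sup>2"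
      proof -
        have "M\<^sup>2 = S powr (1/p) * S powr (1/p)" by (simp add: M_def power2_eq_square)
        also have "\<dots> = S powr (1/p + 1/p)" by (simp only: powr_add)
        also have "1/p + 1/p = 1/(p/2)" by simp
        finally show ?thesis by simp
      qed
      have "(\<Sum>a\<in>A. (f a)\<^sup>2) \<le> real (card A) powr (1 - 2/p) * M\<^sup>2"
        using pm e1 e2 e3 by simp
      then have "L2_set f A \<le> sqrt (real (card A) powr (1 - 2/p) * M\<^sup>2)"
        by (simp add: L2_set_def)
      also have "\<dots> = real (card A) powr ((1 - 2/p)/2) * M"
        using M0 n by (simp add: real_sqrt_mult powr_half_sqrt[symmetric] powr_powr)
      also have "\<dots> \<le> c * real (card A) powr ((1 - 2/p)/2)"
        using mult_right_mono[OF Mc, of "real (card A) powr ((1 - 2/p)/2)"] by (simp add: mult.commute)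
      finally show ?thesis using False qp by (simp add: ex_q_def)
    qed
  qed
qed


lemma L2_set_abs: "L2_set (\<lambda>i. \<bar>f i\<bar>) A = L2_set f A"
  by (simp add: L2_set_def)

lemma L2_set_prod: "L2_set (\<lambda>k. L2_set (W k) B) A = L2_set (\<lambda>(r,s). W r s) (A \<times> B)"
proof (cases "finite A \<and> finite B")
  case True
  have "L2_set (\<lambda>k. L2_set (W k) B) A = sqrt (\<Sum>k\<in>A. \<Sum>j\<in>B. (W k j)\<^sup>2)"
    by (simp add: L2_set_def sum_nonneg)
  also have "(\<Sum>k\<in>A. \<Sum>j\<in>B. (W k j)\<^sup>2) = (\<Sum>(k,j)\<in>A \<times> B. (W k j)\<^sup>2)"
    by (rule sum.cartesian_product)
  finally show ?thesis by (simp add: L2_set_def case_prod_unfold)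
next
  case False
  then show ?thesis
  proof (cases "A = {} \<or> B = {}")
    case True then show ?thesis by (auto simp: L2_set_0')
  next
    case False
    then have "infinite (A \<times> B)" using \<open>\<not> (finite A \<and> finite B)\<close>
      by (auto simp: finite_cartesian_product_iff)
    moreover have "L2_set (\<lambda>k. L2_set (W k) B) A = 0"
      using \<open>\<not> (finite A \<and> finite B)\<close> by (cases "finite A") (auto simp: L2_set_0')
    ultimately show ?thesis by simp
  qed
qed

lemma affine_lip:
  "L2_set (\<lambda>k. affine n W b x k - affine n W b y k) {..<n'}
    \<le> L2_set (\<lambda>(r,s). W r s) ({..<n'} \<times> {..<n}) * L2_set (\<lambda>j. x j - y j) {..<n}"
proof -
  define D where "D = L2_set (\<lambda>j. x j - y j) {..<n}"
  have bd: "\<bar>affine n W b x k - affine n W b y k\<bar> \<le> L2_set (W k) {..<n} * D" for k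
  proof -
    have "affine n W b x k - affine n W b y k = (\<Sum>j<n. W k j * (x j - y j))"
      by (simp add: affine_def sum_subtractf right_diff_distrib)
    also have "\<bar>\<dots>\<bar> \<le> (\<Sum>j<n. \<bar>W k j\<bar> * \<bar>x j - y j\<bar>)"
      by (rule order_trans[OF sum_abs]) (simp add: abs_mult)
    also have "\<dots> \<le> L2_set (W k) {..<n} * D" unfolding D_def by (rule L2_set_mult_ineq)
    finally show ?thesis .
  qed
  have "L2_set (\<lambda>k. affine n W b x k - affine n W b y k) {..<n'}
      = L2_set (\<lambda>k. \<bar>affine n W b x k - affine n W b y k\<bar>) {..<n'}" by (simp add: L2_set_abs)
  also have "\<dots> \<le> L2_set (\<lambda>k. L2_set (W k) {..<n} * D) {..<n'}"
    by (rule L2_set_mono) (use bd in auto)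
  also have "\<dots> = L2_set (\<lambda>k. L2_set (W k) {..<n}) {..<n'} * D"
    by (simp add: L2_set_left_distrib D_def)
  also have "\<dots> = L2_set (\<lambda>(r,s). W r s) ({..<n'} \<times> {..<n}) * D"
    by (simp add: L2_set_prod)
  finally show ?thesis by (simp add: D_def)
qed

lemma relu_lip: "\<bar>relu a - relu b\<bar> \<le> \<bar>a - b\<bar>"
  by (simp add: relu_def max_def)

definition Fr :: "nat list \<Rightarrow> layer list \<Rightarrow> nat \<Rightarrow> real" where
  "Fr arch Phi i = L2_set (\<lambda>(r,s). fst (Phi ! i) r s) ({..<arch ! Suc i} \<times> {..<arch ! i})"

definition Dh :: "nat list \<Rightarrow> layer list \<Rightarrow> nat \<Rightarrow> point \<Rightarrow> point \<Rightarrow> real" where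
  "Dh arch Phi i x y = L2_set (\<lambda>j. hidden_state arch Phi i x j - hidden_state arch Phi i y j) {..<arch ! i}"

lemma Dh_step: "Dh arch Phi (Suc i) x y \<le> Fr arch Phi i * Dh arch Phi i x y"
proof -
  let ?a = "\<lambda>z k. affine (arch ! i) (fst (Phi ! i)) (snd (Phi ! i)) (hidden_state arch Phi i z) k"
  have "Dh arch Phi (Suc i) x y = L2_set (\<lambda>k. \<bar>relu (?a x k) - relu (?a y k)\<bar>) {..<arch ! Suc i}"
    by (simp add: Dh_def L2_set_abs)
  also have "\<dots> \<le> L2_set (\<lambda>k. \<bar>?a x k - ?a y k\<bar>) {..<arch ! Suc i}"
    by (rule L2_set_mono) (auto simp: relu_lip)
  also have "\<dots> \<le> Fr arch Phi i * Dh arch Phi i x y"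
    unfolding L2_set_abs Fr_def Dh_def by (rule affine_lip)
  finally show ?thesis .
qed

lemma Fr_nonneg: "Fr arch Phi i \<ge> 0" by (simp add: Fr_def)

lemma Dh_bound: "Dh arch Phi i x y \<le> (\<Prod>t<i. Fr arch Phi t) * Dh arch Phi 0 x y"
proof (induction i)
  case 0 then show ?case by simp
next
  case (Suc i)
  have "Dh arch Phi (Suc i) x y \<le> Fr arch Phi i * Dh arch Phi i x y" by (rule Dh_step)
  also have "\<dots> \<le> Fr arch Phi i * ((\<Prod>t<i. Fr arch Phi t) * Dh arch Phi 0 x y)"
    by (rule mult_left_mono[OF Suc.IH Fr_nonneg])
  finally show ?case by (simp add: mult_ac)
qed

lemma real_lip:
  assumes "length Phi = L" "L \<ge> 1" "arch ! L \<ge> 1"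
  shows "\<bar>realization arch Phi x - realization arch Phi y\<bar>
     \<le> (\<Prod>t<L. Fr arch Phi t) * L2_set (\<lambda>j. x j - y j) {..<arch ! 0}"
proof -
  define K where "K = L - 1"
  have L: "L = Suc K" using assms by (simp add: K_def)
  let ?a = "\<lambda>z k. affine (arch ! K) (fst (Phi ! K)) (snd (Phi ! K)) (hidden_state arch Phi K z) k"
  have "\<bar>realization arch Phi x - realization arch Phi y\<bar> = \<bar>?a x 0 - ?a y 0\<bar>"
    using assms by (simp add: realization_def K_def)
  also have "\<dots> \<le> L2_set (\<lambda>k. \<bar>?a x k - ?a y k\<bar>) {..<arch ! Suc K}"
    by (rule member_le_L2_set) (use assms L in auto)
  also have "\<dots> \<le> Fr arch Phi K * Dh arch Phi K x y"
    unfolding L2_set_abs Fr_def Dh_def by (rule affine_lip)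
  also have "\<dots> \<le> Fr arch Phi K * ((\<Prod>t<K. Fr arch Phi t) * Dh arch Phi 0 x y)"
    by (rule mult_left_mono[OF Dh_bound Fr_nonneg])
  also have "\<dots> = (\<Prod>t<L. Fr arch Phi t) * L2_set (\<lambda>j. x j - y j) {..<arch ! 0}"
    by (simp add: L Dh_def mult_ac)
  finally show ?thesis .
qed


lemma arch_nth:
  fixes N :: "nat \<Rightarrow> nat"
  assumes "L \<ge> 1"
  shows "([d] @ map N [1..<L] @ [1]) ! 0 = d"
    and "([d] @ map N [1..<L] @ [1]) ! L = 1"
    and "\<And>t. 1 \<le> t \<Longrightarrow> t < L \<Longrightarrow> ([d] @ map N [1..<L] @ [1]) ! t = N t"
    and "length ([d] @ map N [1..<L] @ [1]) = Suc L"
proof -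
  show "([d] @ map N [1..<L] @ [1]) ! 0 = d" by simp
  show "([d] @ map N [1..<L] @ [1]) ! L = 1"
    using assms by (simp add: nth_append)
  show "length ([d] @ map N [1..<L] @ [1]) = Suc L" using assms by simp
  fix t assume "1 \<le> t" "t < L"
  then show "([d] @ map N [1..<L] @ [1]) ! t = N t"
    by (cases t) (auto simp: nth_append)
qed

lemma arch_pos:
  fixes N :: "nat \<Rightarrow> nat"
  assumes "L \<ge> 1" "d \<ge> 1" "\<forall>i\<in>{1..<L}. N i \<ge> 1" "t \<le> L"
  shows "([d] @ map N [1..<L] @ [1]) ! t \<ge> 1"
proof -
  consider "t = 0" | "t = L" | "1 \<le> t \<and> t < L" using assms by linarith
  then show ?thesis using arch_nth[OF assms(1), where d=d and N=N] assms by cases auto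
qed

lemma arch_prod:
  fixes N :: "nat \<Rightarrow> nat" and a :: "nat list"
  assumes L: "L \<ge> 1" and a0: "a ! 0 = d" and aL: "a ! L = 1"
    and aN: "\<And>t. 1 \<le> t \<Longrightarrow> t < L \<Longrightarrow> a ! t = N t"
  shows "(\<Prod>t<L. a ! Suc t * a ! t) = d * (\<Prod>i\<in>{1..<L}. N i)^2"
proof -
  have A: "(\<Prod>t<L. a ! t) = d * (\<Prod>i\<in>{1..<L}. N i)"
  proof -
    have "(\<Prod>t<L. a ! t) = (\<Prod>t\<in>{0..<L}. a ! t)" by (simp add: lessThan_atLeast0)
    also have "\<dots> = a ! 0 * (\<Prod>t\<in>{Suc 0..<L}. a ! t)"
      using L by (subst prod.atLeast_Suc_lessThan) auto
    also have "(\<Prod>t\<in>{Suc 0..<L}. a ! t) = (\<Prod>t\<in>{1..<L}. N t)"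
      by (rule prod.cong) (use aN in auto)
    finally show ?thesis using a0 by simp
  qed
  have B: "(\<Prod>t<L. a ! Suc t) = (\<Prod>i\<in>{1..<L}. N i)"
  proof -
    have "(\<Prod>t<L. a ! Suc t) = (\<Prod>t\<in>{Suc 0..<Suc L}. a ! t)"
      by (simp only: prod.shift_bounds_Suc_ivl lessThan_atLeast0)
    also have "\<dots> = (\<Prod>t\<in>{1..<L}. a ! t) * a ! L"
      by (metis One_nat_def L prod.atLeastLessThan_Suc)
    also have "(\<Prod>t\<in>{1..<L}. a ! t) = (\<Prod>t\<in>{1..<L}. N t)"
      by (rule prod.cong) (use aN in auto)
    finally show ?thesis using aL by simp
  qed
  show ?thesis using A B by (simp add: prod.distrib power2_eq_square mult_ac)
qed

lemma lip_class:
  fixes N :: "nat \<Rightarrow> nat"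
  assumes L: "L \<ge> 1" and d: "d \<ge> 1" and q: "1 \<le> q" and N: "\<forall>i\<in>{1..<L}. N i \<ge> 1"
    and u: "u \<in> hyp_class q ([d] @ map N [1..<L] @ [1]) c"
  shows "\<bar>u x - u y\<bar> \<le> c ^ L * (real d * real (\<Prod>i\<in>{1..<L}. N i)^2) powr (ex_q q / 2)
            * L2_set (\<lambda>j. x j - y j) {..<d}"
proof -
  define a where "a = [d] @ map N [1..<L] @ [1]"
  have a0: "a ! 0 = d" and aL: "a ! L = 1" and aN: "\<And>t. 1 \<le> t \<Longrightarrow> t < L \<Longrightarrow> a ! t = N t"
    and alen: "length a = Suc L" and apos: "\<And>t. t \<le> L \<Longrightarrow> a ! t \<ge> 1"
    unfolding a_def using arch_nth[OF L, where d=d and N=N] arch_pos[OF L d N] by auto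
  note u = u[folded a_def]
  obtain Phi where u: "u = realization a Phi" and len: "length Phi = L"
    and nn: "net_norm q a Phi \<le> c"
    using u alen unfolding hyp_class_def by auto
  define n where "n t = real (a ! Suc t * a ! t)" for t
  have Fb: "Fr a Phi t \<le> c * n t powr (ex_q q / 2)" if t: "t < L" for t
  proof -
    have fin: "finite ((\<lambda>i. max (lq_norm q ({..<a ! Suc i} \<times> {..<a ! i}) (\<lambda>(r, s). fst (Phi ! i) r s))
                    (lq_norm q {..<a ! Suc i} (snd (Phi ! i)))) ` {..<length Phi})" by simp
    have "lq_norm q ({..<a ! Suc t} \<times> {..<a ! t}) (\<lambda>(r, s). fst (Phi ! t) r s) \<le> net_norm q a Phi"
      unfolding net_norm_def
      by (rule order_trans[OF max.cobounded1 Max_ge[OF fin]]) (use t len in auto)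
    then have lq: "lq_norm q ({..<a ! Suc t} \<times> {..<a ! t}) (\<lambda>(r, s). fst (Phi ! t) r s) \<le> c"
      using nn by linarith
    have p1: "a ! Suc t \<ge> 1" "a ! t \<ge> 1" using apos t by auto
    have "Fr a Phi t \<le> c * real (card ({..<a ! Suc t} \<times> {..<a ! t})) powr (ex_q q / 2)"
      unfolding Fr_def by (rule frob[OF _ _ q lq]) (use p1 in \<open>auto simp: lessThan_empty_iff\<close>)
    then show ?thesis by (simp add: n_def card_cartesian_product)
  qed
  have "\<bar>u x - u y\<bar> \<le> (\<Prod>t<L. Fr a Phi t) * L2_set (\<lambda>j. x j - y j) {..<a ! 0}"
    unfolding u by (rule real_lip[OF len L]) (use aL in simp)
  also have "\<dots> \<le> (\<Prod>t<L. c * n t powr (ex_q q / 2)) * L2_set (\<lambda>j. x j - y j) {..<d}"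
    unfolding a0 by (rule mult_right_mono, rule prod_mono) (use Fb Fr_nonneg in auto)
  also have "(\<Prod>t<L. c * n t powr (ex_q q / 2)) = c ^ L * (\<Prod>t<L. n t) powr (ex_q q / 2)"
    by (simp add: prod.distrib prod_powr_distrib)
  also have "(\<Prod>t<L. n t) = real d * real (\<Prod>i\<in>{1..<L}. N i)^2"
    unfolding n_def using arch_prod[OF L a0 aL aN] by (metis of_nat_mult of_nat_power of_nat_prod)
  finally show ?thesis .
qed


lemma space_cube: "space (cube_measure d) = cube d"
  by (simp add: cube_measure_def cube_def space_PiM)

lemma comp_meas[measurable]: "(\<lambda>x. x j) \<in> borel_measurable (cube_measure d)"
proof (cases "j < d")
  case True
  have 1: "(\<lambda>x. x j) \<in> cube_measure d \<rightarrow>\<^sub>M restrict_space lborel {0..1::real}"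
    unfolding cube_measure_def by (rule measurable_component_singleton) (use True in simp)
  have 2: "(\<lambda>x::real. x) \<in> restrict_space lborel {0..1} \<rightarrow>\<^sub>M borel"
    by (rule measurable_restrict_space1) (rule measurable_ident_sets, simp)
  show ?thesis using measurable_compose[OF 1 2] .
next
  case False
  show ?thesis
    apply (subst measurable_cong[where g="\<lambda>x. undefined"])
    using False apply (auto simp: cube_measure_def space_PiM PiE_def extensional_def)
    done
qed

lemma hidden_meas[measurable]:
  "(\<lambda>x. hidden_state arch Phi i x k) \<in> borel_measurable (cube_measure d)"
proof (induction i arbitrary: k)
  case 0 then show ?case by simp
next
  case (Suc i)
  note [measurable] = Suc.IH
  show ?case by (simp add: relu_def affine_def)
qed

lemma real_meas[measurable]:
  "(\<lambda>x. realization arch Phi x) \<in> borel_measurable (cube_measure d)"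
  unfolding realization_def Let_def affine_def by measurable

lemma esssup_bound:
  assumes "f \<in> borel_measurable (cube_measure d)" "\<And>x. x \<in> cube d \<Longrightarrow> \<bar>f x\<bar> \<le> B"
  shows "linf_enorm d f \<le> ennreal B"
proof -
  have "esssup (cube_measure d) (\<lambda>x. ereal \<bar>f x\<bar>) \<le> ereal B"
    by (rule esssup_I) (use assms in \<open>auto simp: space_cube\<close>)
  then have "e2ennreal (esssup (cube_measure d) (\<lambda>x. ereal \<bar>f x\<bar>)) \<le> e2ennreal (ereal B)"
    by (rule e2ennreal_mono)
  then show ?thesis by (simp add: linf_enorm_def)
qed

definition Qf :: "nat \<Rightarrow> nat \<Rightarrow> (nat \<Rightarrow> nat \<Rightarrow> nat) \<Rightarrow> nat \<Rightarrow> real list \<Rightarrow> point \<Rightarrow> real" where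
  "Qf d n e K ys x = (\<Sum>k<K. if (\<forall>j\<in>{..<d}. min (real n - 1) (real_of_int \<lfloor>real n * x j\<rfloor>) = real (e k j))
       then ys ! k else 0)"

lemma Qf_meas[measurable]: "Qf d n e K ys \<in> borel_measurable (cube_measure d)"
  unfolding Qf_def by measurable

lemma Qf_Linf: "Qf d n e K ys \<in> Linf d"
proof -
  have "linf_enorm d (Qf d n e K ys) \<le> ennreal (\<Sum>k<K. \<bar>ys ! k\<bar>)"
  proof (rule esssup_bound[OF Qf_meas])
    fix x
    show "\<bar>Qf d n e K ys x\<bar> \<le> (\<Sum>k<K. \<bar>ys ! k\<bar>)"
      unfolding Qf_def by (rule order_trans[OF sum_abs], rule sum_mono) auto
  qed
  then show ?thesis by (auto simp: Linf_def top.not_eq_extremum intro: le_less_trans)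
qed


lemma floor_bounds:
  fixes n :: nat and t :: real
  assumes n: "n \<ge> 1" and t: "0 \<le> t" "t \<le> 1"
  defines "k \<equiv> nat (min (int n - 1) \<lfloor>real n * t\<rfloor>)"
  shows "real k = min (real n - 1) (real_of_int \<lfloor>real n * t\<rfloor>)" and "k < n"
    and "0 \<le> t - real k / real n" and "t - real k / real n \<le> 1 / real n"
proof -
  have f0: "\<lfloor>real n * t\<rfloor> \<ge> 0" using t by simp
  show k: "real k = min (real n - 1) (real_of_int \<lfloor>real n * t\<rfloor>)"
    using f0 n unfolding k_def by (simp add: min_def of_nat_diff)
  show "k < n" using n f0 unfolding k_def by auto
  have np: "real n > 0" using n by simp
  have fl1: "real_of_int \<lfloor>real n * t\<rfloor> \<le> real n * t" by simp
  have fl2: "real n * t < real_of_int \<lfloor>real n * t\<rfloor> + 1" by linarith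
  have nt: "real n * t \<le> real n" using t np by simp
  have "min (real n - 1) (real_of_int \<lfloor>real n * t\<rfloor>) \<le> real_of_int \<lfloor>real n * t\<rfloor>" by simp
  then have "real k \<le> real n * t" using k fl1 by linarith
  then show "0 \<le> t - real k / real n" using np by (simp add: field_simps)
  have "real n * t \<le> real k + 1"
  proof (cases "real_of_int \<lfloor>real n * t\<rfloor> \<le> real n - 1")
    case True then show ?thesis using k fl2 by simp
  next
    case False then show ?thesis using k nt by simp
  qed
  then have h: "real n * t - real k \<le> 1" by simp
  have "t - real k / real n = (real n * t - real k) / real n" using np by (simp add: field_simps)
  also have "\<dots> \<le> 1 / real n" using h np by (intro divide_right_mono) auto
  finally show "t - real k / real n \<le> 1 / real n" .
qed

lemma grid_point:
  assumes n: "n \<ge> 1" and e: "bij_betw e {0..<n^d} (PiE {..<d} (\<lambda>_. {..<n}))"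
    and x: "x \<in> cube d"
  obtains k0 where "k0 < n^d" "\<And>ys. Qf d n e (n^d) ys x = ys ! k0"
    "\<And>j. j < d \<Longrightarrow> 0 \<le> x j - real (e k0 j) / real n \<and> x j - real (e k0 j) / real n \<le> 1 / real n"
proof -
  define kn where "kn j = nat (min (int n - 1) \<lfloor>real n * x j\<rfloor>)" for j
  have xj: "0 \<le> x j \<and> x j \<le> 1" if "j < d" for j using x that by (auto simp: cube_def PiE_def Pi_def)
  note fb = floor_bounds[OF n, of "x j" for j, folded kn_def]
  define ka where "ka = restrict kn {..<d}"
  have kaG: "ka \<in> PiE {..<d} (\<lambda>_. {..<n})" using fb(2) xj unfolding ka_def by auto
  then obtain k0 where k0: "k0 \<in> {0..<n^d}" "e k0 = ka"
    using e unfolding bij_betw_def by (metis imageE)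
  have cond: "(\<forall>j\<in>{..<d}. min (real n - 1) (real_of_int \<lfloor>real n * x j\<rfloor>) = real (e k j)) \<longleftrightarrow> k = k0"
    if k: "k < n^d" for k
  proof -
    have ekG: "e k \<in> PiE {..<d} (\<lambda>_. {..<n})" using e k unfolding bij_betw_def by auto
    have "(\<forall>j\<in>{..<d}. min (real n - 1) (real_of_int \<lfloor>real n * x j\<rfloor>) = real (e k j))
        \<longleftrightarrow> (\<forall>j\<in>{..<d}. kn j = e k j)"
    proof -
      have kr: "real (kn j) = min (real n - 1) (real_of_int \<lfloor>real n * x j\<rfloor>)" if "j < d" for j
        using fb(1) xj[OF that] by blast
      have "(\<forall>j\<in>{..<d}. min (real n - 1) (real_of_int \<lfloor>real n * x j\<rfloor>) = real (e k j))
        \<longleftrightarrow> (\<forall>j\<in>{..<d}. real (kn j) = real (e k j))" using kr by auto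
      then show ?thesis by simp
    qed
    also have "\<dots> \<longleftrightarrow> e k = ka"
    proof
      assume H: "\<forall>j\<in>{..<d}. kn j = e k j"
      show "e k = ka"
        by (rule PiE_ext[OF ekG kaG]) (use H in \<open>auto simp: ka_def\<close>)
    next
      assume "e k = ka" then show "\<forall>j\<in>{..<d}. kn j = e k j" by (simp add: ka_def)
    qed
    also have "\<dots> \<longleftrightarrow> k = k0"
      using k k0 e unfolding bij_betw_def inj_on_def by auto
    finally show ?thesis .
  qed
  show ?thesis
  proof
    show "k0 < n^d" using k0 by simp
    fix ys
    have "Qf d n e (n^d) ys x = (\<Sum>k<n^d. if k = k0 then ys ! k else 0)"
      unfolding Qf_def by (rule sum.cong) (use cond in auto)
    also have "\<dots> = ys ! k0" using k0 by simp
    finally show "Qf d n e (n^d) ys x = ys ! k0" .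
  next
    fix j assume j: "j < d"
    have "e k0 j = kn j" using k0 j by (simp add: ka_def)
    then show "0 \<le> x j - real (e k0 j) / real n \<and> x j - real (e k0 j) / real n \<le> 1 / real n"
      using fb(3,4) xj[OF j] by simp
  qed
qed


lemma samples_eq: "samples (\<lambda>k xs ys. g k) u k = map g [0..<k]"
  by (induction k) (simp_all add: Let_def)

lemma grid_size:
  fixes m d :: nat assumes m: "m \<ge> 1" and d: "d \<ge> 1"
  defines "n \<equiv> nat \<lfloor>real m powr (1 / real d)\<rfloor>"
  shows "n \<ge> 1" "n ^ d \<le> m" "real m powr (1 / real d) \<le> 2 * real n"
proof -
  define t where "t = real m powr (1 / real d)"
  have t1: "t \<ge> 1" unfolding t_def using m by (intro ge_one_powr_ge_zero) auto
  have nt: "real n \<le> t" "t < real n + 1" unfolding n_def t_def[symmetric] using t1 by linarith+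
  show n1: "n \<ge> 1" unfolding n_def t_def[symmetric] using t1 by linarith
  have "real n ^ d \<le> t ^ d" using nt by (intro power_mono) auto
  also have "t ^ d = t powr real d" using t1 by (simp add: powr_realpow)
  also have "\<dots> = real m" unfolding t_def using d m by (simp add: powr_powr)
  finally show "n ^ d \<le> m" by (metis of_nat_le_iff of_nat_power)
  show "real m powr (1 / real d) \<le> 2 * real n" using nt n1 unfolding t_def by linarith
qed

theorem theorem2p7:
  fixes L d m :: nat and q :: ereal and c :: real and N :: "nat \<Rightarrow> nat"
  assumes "L \<ge> 1" and "d \<ge> 1" and "1 \<le> q" and "c > 0"
    and "\<forall>i\<in>{1..<L}. N i \<ge> 1" and "m \<ge> 1"
  shows "errMC TYPE('w) m (hyp_class q ([d] @ map N [1..<L] @ [1]) c) d \<le>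
    ennreal (if q \<le> 2
      then 2 * sqrt (real d) * c ^ L * real m powr (- 1 / real d)
      else 2 * sqrt (real d) * c ^ L
             * (sqrt (real d) * real (\<Prod>i\<in>{1..<L}. N i))
                 powr (if q = \<infinity> then 1 else 1 - 2 / real_of_ereal q)
             * real m powr (- 1 / real d))"
proof -
  note L = assms(1) and d = assms(2) and q = assms(3) and c = assms(4) and N = assms(5) and m = assms(6)
  define U where "U = hyp_class q ([d] @ map N [1..<L] @ [1]) c"
  define R where "R = (if q \<le> 2
      then 2 * sqrt (real d) * c ^ L * real m powr (- 1 / real d)
      else 2 * sqrt (real d) * c ^ L
             * (sqrt (real d) * real (\<Prod>i\<in>{1..<L}. N i))
                 powr (if q = \<infinity> then 1 else 1 - 2 / real_of_ereal q)
             * real m powr (- 1 / real d))"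
  define P where "P = real (\<Prod>i\<in>{1..<L}. N i)"
  have P1: "P \<ge> 1" unfolding P_def using N
    by (metis of_nat_1 of_nat_le_iff prod_ge_1)
  define Kc where "Kc = c ^ L * (real d * P^2) powr (ex_q q / 2)"
  have Kc0: "Kc \<ge> 0" unfolding Kc_def using c by simp
  define n where "n = nat \<lfloor>real m powr (1 / real d)\<rfloor>"
  have n1: "n \<ge> 1" and nm: "n ^ d \<le> m" and mn: "real m powr (1 / real d) \<le> 2 * real n"
    using grid_size[OF m d] unfolding n_def by auto
  define G where "G = PiE {..<d} (\<lambda>_. {..<n})"
  have cardG: "card G = n ^ d" unfolding G_def by (simp add: card_PiE)
  obtain e where e: "bij_betw e {0..<n^d} G"
    using ex_bij_betw_nat_finite[of G] cardG unfolding G_def by (auto simp: finite_PiE)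
  define gp where "gp k = (if k < n^d then restrict (\<lambda>j. real (e k j) / real n) {..<d}
                            else restrict (\<lambda>_. 0) {..<d})" for k
  have gp_cube: "gp k \<in> cube d" for k
  proof (cases "k < n^d")
    case True
    then have "e k \<in> G" using e unfolding bij_betw_def by auto
    then have "e k j < n" if "j < d" for j using that unfolding G_def by auto
    then show ?thesis using True n1 unfolding gp_def cube_def by (auto simp: field_simps less_imp_le)
  qed (simp add: gp_def cube_def)
  define f where "f = (\<lambda>(k::nat) (xs::point list) (ys::real list). gp k)"
  define Q where "Q = (\<lambda>(xs::point list) ys. Qf d n e (n^d) ys)"
  define A where "A = (\<lambda>(\<omega>::'w) u. Q (samples f u m) (map u (samples f u m)))"
  define Pm where "Pm = return (count_space (UNIV::'w set)) undefined"
  define mm where "mm = (\<lambda>\<omega>::'w. m)"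
  have err: "linf_enorm d (\<lambda>x. u x - A \<omega> u x) \<le> ennreal (Kc * (sqrt (real d) / real n))"
    if u: "u \<in> U" for u \<omega>
  proof -
    obtain Phi where uP: "u = realization ([d] @ map N [1..<L] @ [1]) Phi"
      using u unfolding U_def hyp_class_def by auto
    have Aeq: "A \<omega> u = Qf d n e (n^d) (map u (map gp [0..<m]))"
      unfolding A_def Q_def f_def by (simp add: samples_eq)
    show ?thesis
    proof (rule esssup_bound)
      show "(\<lambda>x. u x - A \<omega> u x) \<in> borel_measurable (cube_measure d)"
      proof -
        have m1: "u \<in> borel_measurable (cube_measure d)" using real_meas unfolding uP by simp
        have m2: "A \<omega> u \<in> borel_measurable (cube_measure d)" unfolding Aeq by (rule Qf_meas)
        show ?thesis using borel_measurable_diff[OF m1 m2] by simp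
      qed
      fix x assume x: "x \<in> cube d"
      obtain k0 where k0: "k0 < n^d" "\<And>ys. Qf d n e (n^d) ys x = ys ! k0"
        "\<And>j. j < d \<Longrightarrow> 0 \<le> x j - real (e k0 j) / real n \<and> x j - real (e k0 j) / real n \<le> 1 / real n"
        using grid_point[OF n1 e[unfolded G_def] x] by blast
      have "A \<omega> u x = u (gp k0)" using k0(1,2) nm unfolding Aeq by simp
      then have "\<bar>u x - A \<omega> u x\<bar> = \<bar>u x - u (gp k0)\<bar>" by simp
      also have "\<dots> \<le> Kc * L2_set (\<lambda>j. x j - gp k0 j) {..<d}"
        using lip_class[OF L d q N u[unfolded U_def]] unfolding Kc_def P_def by simp
      also have "L2_set (\<lambda>j. x j - gp k0 j) {..<d} \<le> L2_set (\<lambda>_. 1 / real n) {..<d}"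
        by (rule L2_set_mono) (use k0(1,3) in \<open>auto simp: gp_def\<close>)
      also have "\<dots> = sqrt (real d) / real n" by (simp add: L2_set_constant)
      finally show "\<bar>u x - A \<omega> u x\<bar> \<le> Kc * (sqrt (real d) / real n)"
        using Kc0 by (simp add: mult_left_mono)
    qed
  qed
  have KR: "Kc * (sqrt (real d) / real n) \<le> R"
  proof -
    have Kc_eq: "R = 2 * sqrt (real d) * Kc * real m powr (- 1 / real d)"
    proof (cases "q \<le> 2")
      case True
      have "(real d * P^2) > 0" using d P1 by simp
      then show ?thesis using True P1 by (simp add: R_def Kc_def ex_q_def)
    next
      case False
      define E where "E = (if q = \<infinity> then 1 else 1 - 2 / real_of_ereal q)"
      have sp: "sqrt (real d) * P > 0" using d P1 by simp
      have "real d * P^2 = (sqrt (real d) * P) powr 2"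
        using sp by (simp add: power_mult_distrib powr_realpow[symmetric])
      then have "(real d * P^2) powr (ex_q q / 2) = (sqrt (real d) * P) powr E"
        using False by (simp add: powr_powr ex_q_def E_def)
      then show ?thesis using False by (simp add: R_def Kc_def P_def E_def mult_ac)
    qed
    have mp: "real m powr (1 / real d) > 0" using m by simp
    have "1 / real n \<le> 2 * real m powr (- 1 / real d)"
    proof -
      have "real m powr (- 1 / real d) = 1 / real m powr (1 / real d)"
        by (simp add: powr_minus_divide[symmetric])
      moreover have "1 / real n \<le> 2 / real m powr (1 / real d)"
        using mn mp n1 by (simp add: field_simps)
      ultimately show ?thesis by simp
    qed
    then have "Kc * sqrt (real d) * (1 / real n) \<le> Kc * sqrt (real d) * (2 * real m powr (- 1 / real d))"
      using Kc0 by (intro mult_left_mono) auto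
    then show ?thesis unfolding Kc_eq by (simp add: mult_ac)
  qed
  have QL: "Q xs ys \<in> Linf d" for xs ys unfolding Q_def by (rule Qf_Linf)
  have sp: "space (Linf_borel d) = Linf d" unfolding Linf_borel_def by (simp add: space_measure_of_conv)
  have mem: "(Pm, A, mm) \<in> AlgMC TYPE('w) m U d"
    unfolding AlgMC_def
  proof (clarsimp, intro conjI)
    show "prob_space Pm" unfolding Pm_def by (rule prob_space_return) simp
    show "mm \<in> Pm \<rightarrow>\<^sub>M count_space UNIV" unfolding Pm_def
      by (subst measurable_cong_sets[where M'="count_space UNIV" and N'="count_space UNIV"]) auto
    show "(\<integral>\<^sup>+ \<omega>. of_nat (mm \<omega>) \<partial>Pm) \<le> of_nat m"
      unfolding Pm_def mm_def by (subst nn_integral_return) auto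
    show "\<forall>u\<in>U. (\<lambda>\<omega>. A \<omega> u) \<in> Pm \<rightarrow>\<^sub>M Linf_borel d"
    proof
      fix u assume "u \<in> U"
      show "(\<lambda>\<omega>. A \<omega> u) \<in> Pm \<rightarrow>\<^sub>M Linf_borel d" unfolding Pm_def
        by (subst measurable_cong_sets[where M'="count_space UNIV" and N'="Linf_borel d"])
           (auto simp: sp A_def QL)
    qed
    show "\<forall>\<omega>\<in>space Pm. A \<omega> \<in> Alg (mm \<omega>) U d"
      unfolding Alg_def mm_def
    proof (intro ballI)
      fix \<omega> :: 'w
      show "A \<omega> \<in> {A. \<exists>f Q. (\<forall>k xs ys. f k xs ys \<in> cube d) \<and> (\<forall>xs ys. Q xs ys \<in> Linf d) \<and>
            (\<forall>u\<in>U. A u = Q (samples f u m) (map u (samples f u m)))}"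
        by (intro CollectI exI[of _ f] exI[of _ Q] conjI) (use gp_cube QL in \<open>auto simp: f_def A_def\<close>)
    qed
  qed
  have "errMC TYPE('w) m U d \<le> (SUP u\<in>U. \<integral>\<^sup>+ \<omega>. linf_enorm d (\<lambda>x. u x - A \<omega> u x) \<partial>Pm)"
    unfolding errMC_def by (rule INF_lower2[OF mem]) simp
  also have "\<dots> \<le> ennreal R"
  proof (rule SUP_least)
    fix u assume u: "u \<in> U"
    have "(\<integral>\<^sup>+ \<omega>. linf_enorm d (\<lambda>x. u x - A \<omega> u x) \<partial>Pm) = linf_enorm d (\<lambda>x. u x - A undefined u x)"
      unfolding Pm_def by (subst nn_integral_return) auto
    also have "\<dots> \<le> ennreal (Kc * (sqrt (real d) / real n))" by (rule err[OF u])
    also have "\<dots> \<le> ennreal R" using KR by (rule ennreal_leI)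
    finally show "(\<integral>\<^sup>+ \<omega>. linf_enorm d (\<lambda>x. u x - A \<omega> u x) \<partial>Pm) \<le> ennreal R" .
  qed
  finally show ?thesis unfolding U_def R_def .
qed

end
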